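(* Let $\mathcal{M}$ be a separable metric space, $f:\mathcal{M}\to\mathcal{M}$ a continuous bijection with continuous inverse, $\mathcal{X}\subseteq\mathcal{M}$ forward invariant under $f$, $\mathcal{Z}$ a separable metric space, $g:\mathcal{Z}\to\mathcal{Z}$ a continuous bijection with continuous inverse, and $F:\mathcal{X}\to\mathcal{Z}$ continuous with $F\circ f=g\circ F$ on $\mathcal{X}$. For any $\xi\in\mathcal{X}$, if the trajectory through $\xi$ is backward precompact in $\mathcal{X}$, then $F(\xi)\in D^-_{\mathcal{Z}}(F(\alpha_{\mathcal{X}}(\xi)))$.
   Context: $\alpha_{\mathcal{X}}(\xi)$ is the set of $x\in\mathcal{X}$ such that $f^{-k_j}(\xi)\to x$ for some indices $k_j\to\infty$ ($f^{-k}$ the $k$-th iterate of $f^{-1}$); $\alpha_{\mathcal{Z}}(\zeta)$ is defined analogously with $g^{-1}$. $D^-_{\mathcal{Z}}(\Gamma)=\{\zeta\in\mathcal{Z}\mid\alpha_{\mathcal{Z}}(\zeta)=\Gamma\}$. The trajectory through $\xi$ is backward precompact in $\mathcal{X}$ if the closure in $\mathcal{X}$ of $\{f^{-k}(\xi)\mid k\in\mathbb{N}\}$ is compact. *)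

theory Defs
  imports "HOL-Analysis.Analysis"
begin

definition separable_space :: "'a::metric_space itself \<Rightarrow> bool" where
  "separable_space _ \<longleftrightarrow> (\<exists>D::'a set. countable D \<and> closure D = UNIV)"

definition alpha_limit :: "'a::metric_space set \<Rightarrow> ('a \<Rightarrow> 'a) \<Rightarrow> 'a \<Rightarrow> 'a set" where
  "alpha_limit S h \<xi> = {x \<in> S. \<exists>k::nat \<Rightarrow> nat. filterlim k at_top sequentially \<and>
       (\<lambda>j. ((inv h) ^^ (k j)) \<xi>) \<longlonglongrightarrow> x}"

definition Dminus :: "'a::metric_space set \<Rightarrow> ('a \<Rightarrow> 'a) \<Rightarrow> 'a set \<Rightarrow> 'a set" where
  "Dminus S h \<Gamma> = {\<zeta> \<in> S. alpha_limit S h \<zeta> = \<Gamma>}"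

definition backward_precompact :: "'a::metric_space set \<Rightarrow> ('a \<Rightarrow> 'a) \<Rightarrow> 'a \<Rightarrow> bool" where
  "backward_precompact S h \<xi> \<longleftrightarrow>
     (\<forall>k. ((inv h) ^^ k) \<xi> \<in> S) \<and>
     compact (S \<inter> closure {((inv h) ^^ k) \<xi> | k. True})"

end

theory Submission
  imports Defs
begin

theorem corollary27:
  fixes f :: "'a::metric_space \<Rightarrow> 'a" and g :: "'b::metric_space \<Rightarrow> 'b"
    and F :: "'a \<Rightarrow> 'b" and X :: "'a set" and \<xi> :: 'a
  assumes sepM: "separable_space TYPE('a)"
    and f_bij: "bij f" and f_cont: "continuous_on UNIV f" and finv_cont: "continuous_on UNIV (inv f)"
    and X_inv: "f ` X \<subseteq> X"
    and sepZ: "separable_space TYPE('b)"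
    and g_bij: "bij g" and g_cont: "continuous_on UNIV g" and ginv_cont: "continuous_on UNIV (inv g)"
    and F_cont: "continuous_on X F"
    and F_conj: "\<And>x. x \<in> X \<Longrightarrow> F (f x) = g (F x)"
    and \<xi>X: "\<xi> \<in> X"
    and bpc: "backward_precompact X f \<xi>"
  shows "F \<xi> \<in> Dminus UNIV g (F ` alpha_limit X f \<xi>)"
proof -
  define x where "x k = ((inv f) ^^ k) \<xi>" for k
  have xX: "x k \<in> X" for k using bpc unfolding backward_precompact_def x_def by blast
  have K: "compact (X \<inter> closure (range x))"
    using bpc unfolding backward_precompact_def x_def by (simp add: full_SetCompr_eq)
  have Fx: "F (x k) = ((inv g) ^^ k) (F \<xi>)" for k
  proof (induction k)
    case 0 then show ?case by (simp add: x_def)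
  next
    case (Suc k)
    have "x k = f (x (Suc k))" unfolding x_def using f_bij
      by (simp add: bij_is_surj surj_f_inv_f)
    then have "F (x k) = g (F (x (Suc k)))" using F_conj xX by metis
    then have "F (x (Suc k)) = inv g (F (x k))" using g_bij
      by (metis bij_is_inj inv_f_f)
    then show ?case using Suc by simp
  qed
  have Fc: "(\<lambda>j. F (s j)) \<longlonglongrightarrow> F a" if "\<And>j. s j \<in> X" "s \<longlonglongrightarrow> a" "a \<in> X" for s a
    using F_cont that unfolding continuous_on_sequentially comp_def by blast
  have "alpha_limit UNIV g (F \<xi>) = F ` alpha_limit X f \<xi>"
  proof
    show "alpha_limit UNIV g (F \<xi>) \<subseteq> F ` alpha_limit X f \<xi>"
    proof
      fix z assume "z \<in> alpha_limit UNIV g (F \<xi>)"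
      then obtain k where k: "filterlim k at_top sequentially"
        and kz: "(\<lambda>j. ((inv g) ^^ (k j)) (F \<xi>)) \<longlonglongrightarrow> z"
        unfolding alpha_limit_def by blast
      have "\<forall>n. x (k n) \<in> X \<inter> closure (range x)" using xX closure_subset by blast
      then obtain a r where a: "a \<in> X \<inter> closure (range x)" and r: "strict_mono r"
        and ar: "((\<lambda>n. x (k n)) \<circ> r) \<longlonglongrightarrow> a"
        using compact_imp_seq_compact[OF K] unfolding seq_compact_def by metis
      have kr: "filterlim (k \<circ> r) at_top sequentially"
        using filterlim_compose[OF k filterlim_subseq[OF r]] by (simp add: comp_def)
      have "(\<lambda>j. F (x (k (r j)))) \<longlonglongrightarrow> F a"
        using Fc[of "\<lambda>j. x (k (r j))" a] xX a ar by (simp add: comp_def)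
      moreover have "(\<lambda>j. F (x (k (r j)))) \<longlonglongrightarrow> z"
        using LIMSEQ_subseq_LIMSEQ[OF kz r] by (simp add: Fx comp_def)
      ultimately have "z = F a" using LIMSEQ_unique by blast
      moreover have "a \<in> alpha_limit X f \<xi>"
        unfolding alpha_limit_def using a kr ar by (auto simp: x_def comp_def)
      ultimately show "z \<in> F ` alpha_limit X f \<xi>" by blast
    qed
  next
    show "F ` alpha_limit X f \<xi> \<subseteq> alpha_limit UNIV g (F \<xi>)"
    proof
      fix z assume "z \<in> F ` alpha_limit X f \<xi>"
      then obtain a k where z: "z = F a" and aX: "a \<in> X" and k: "filterlim k at_top sequentially"
        and ka: "(\<lambda>j. x (k j)) \<longlonglongrightarrow> a"
        unfolding alpha_limit_def x_def by blast
      have "(\<lambda>j. F (x (k j))) \<longlonglongrightarrow> F a" using Fc[of "\<lambda>j. x (k j)" a] xX aX ka by simp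
      then show "z \<in> alpha_limit UNIV g (F \<xi>)"
        unfolding alpha_limit_def using k z by (auto simp: Fx)
    qed
  qed
  then show ?thesis unfolding Dminus_def by simp
qed

end
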